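(* Let $\epsilon>0$, $\gamma>0$ and $k\ge 2$. For $B=(B^1,\dots,B^k)\in\mathbb R^k$ and $a\in[-1,1]$ define $$F_B(a)=\sum_{\substack{i,j\in\{1,\dots,k\}\\ i\neq j}}\exp\Bigl(-\frac{\epsilon\,|B^i-B^j+\gamma a|}{2\gamma}\Bigr).$$ Then $$\sup_{B\in\mathbb R^k,\ a,a'\in[-1,1]}\frac{F_B(a)}{F_B(a')}=e^{\epsilon/2},$$ with the supremum attained when $B^1=\dots=B^k$, $a=0$ and $a'\in\{-1,1\}$. Hence, defining $\epsilon_2=\ln\sup_{B,a,a'}F_B(a)/F_B(a')$, one has $\epsilon_2=\epsilon/2$, and the expected privacy loss against adversary II, $\frac1k\cdot 0+\frac{k-1}{k}\,\epsilon_2$, equals $\frac{k-1}{k}\cdot\frac{\epsilon}{2}$.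
   Context: Setting: a client holds a private value $a\in[-1,1]$ (a clipped average gradient coordinate) and, given a model weight $B^{\mathrm{pre}}$, returns $B^{\mathrm{pre}}-\gamma a+L$ where $L$ is Laplace noise with mean $0$ and scale $2\gamma/\epsilon$ (density proportional to $\exp(-\epsilon|x|/(2\gamma))$); this alone gives $\epsilon$-differential privacy. The server holds $k$ model instances; the instance sent to the client (the pre-image) is uniformly random and the returned model overwrites a uniformly random instance. Adversary II sees the $k$ instances $B^1,\dots,B^k$ right after the update but not which instance was the pre-image nor which was the returned one. With probability $1/k$ the returned model overwrote its own pre-image, in which case the privacy loss is taken to be $0$; with probability $(k-1)/k$ both the pre-image and the returned model are among the $k$ observed instances, each ordered pair (returned $=B^i$, pre-image $=B^j$), $i\ne j$, being equally likely, so that the likelihood of the observation given $a$ is proportional to $F_B(a)$, and the privacy loss in this case is $\epsilon_2$. The expected privacy loss is the average of these two losses weighted by their probabilities. *)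

theory Defs
  imports Complex_Main
begin

text \<open>Models B = (B^1,...,B^k) as a function nat => real; only indices 1..k matter.\<close>
definition F :: "nat \<Rightarrow> real \<Rightarrow> real \<Rightarrow> (nat \<Rightarrow> real) \<Rightarrow> real \<Rightarrow> real" where
  "F k eps gam B a =
     (\<Sum>(i,j) \<in> {(i,j). i \<in> {1..k} \<and> j \<in> {1..k} \<and> i \<noteq> j}.
        exp (- (eps * \<bar>B i - B j + gam * a\<bar>) / (2 * gam)))"

definition ratio_set :: "nat \<Rightarrow> real \<Rightarrow> real \<Rightarrow> real set" where
  "ratio_set k eps gam =
     {F k eps gam B a / F k eps gam B a' | B a a'. a \<in> {-1..1} \<and> a' \<in> {-1..1}}"

definition eps2 :: "nat \<Rightarrow> real \<Rightarrow> real \<Rightarrow> real" where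
  "eps2 k eps gam = ln (Sup (ratio_set k eps gam))"

definition expected_loss_II :: "nat \<Rightarrow> real \<Rightarrow> real \<Rightarrow> real" where
  "expected_loss_II k eps gam = (1 / real k) * 0 + ((real k - 1) / real k) * eps2 k eps gam"

end

theory Submission
  imports Defs
begin

lemma term_bound:
  fixes eps gam t a b :: real
  assumes "eps > 0" "gam > 0" "\<bar>a - b\<bar> \<le> 1"
  shows "exp (- (eps * \<bar>t + gam * a\<bar>) / (2 * gam))
         \<le> exp (eps / 2) * exp (- (eps * \<bar>t + gam * b\<bar>) / (2 * gam))"
proof -
  have h1: "\<bar>t + gam * b\<bar> \<le> \<bar>t + gam * a\<bar> + \<bar>gam * (b - a)\<bar>"
    using abs_triangle_ineq[of "t + gam * a" "gam * (b - a)"] by (simp add: algebra_simps)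
  have h2: "\<bar>gam * (b - a)\<bar> = gam * \<bar>b - a\<bar>" using assms by (simp add: abs_mult)
  have h3: "gam * \<bar>b - a\<bar> \<le> gam" using assms by (simp add: mult_left_le abs_minus_commute)
  have "\<bar>t + gam * b\<bar> \<le> \<bar>t + gam * a\<bar> + gam" using h1 h2 h3 by linarith
  hence "eps * \<bar>t + gam * b\<bar> \<le> eps * \<bar>t + gam * a\<bar> + eps * gam" using assms
    by (metis distrib_left mult_le_cancel_left_pos)
  hence "- (eps * \<bar>t + gam * a\<bar>) / (2 * gam) \<le> eps / 2 + - (eps * \<bar>t + gam * b\<bar>) / (2 * gam)"
    using assms by (simp add: field_simps)
  thus ?thesis by (simp add: exp_add[symmetric])
qed

definition S :: "nat \<Rightarrow> (nat \<times> nat) set" where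
  "S k = {(i,j). i \<in> {1..k} \<and> j \<in> {1..k} \<and> i \<noteq> j}"

lemma F_S: "F k eps gam B a = (\<Sum>p \<in> S k. exp (- (eps * \<bar>B (fst p) - B (snd p) + gam * a\<bar>) / (2 * gam)))"
  unfolding F_def S_def by (simp add: case_prod_beta)

lemma finS: "finite (S k)"
proof -
  have "S k \<subseteq> {1..k} \<times> {1..k}" by (auto simp: S_def)
  thus ?thesis by (rule finite_subset) auto
qed

lemma F_neg: "F k eps gam B (-a) = F k eps gam B a"
proof -
  have inj: "inj_on prod.swap (S k)" by (auto simp: inj_on_def)
  have im: "prod.swap ` S k = S k" by (auto simp: S_def image_iff)
  have "F k eps gam B a = (\<Sum>p \<in> prod.swap ` S k. exp (- (eps * \<bar>B (fst p) - B (snd p) + gam * a\<bar>) / (2 * gam)))"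
    by (simp add: F_S im)
  also have "\<dots> = (\<Sum>p \<in> S k. exp (- (eps * \<bar>B (snd p) - B (fst p) + gam * a\<bar>) / (2 * gam)))"
    by (simp add: sum.reindex[OF inj])
  also have "\<dots> = F k eps gam B (-a)"
    unfolding F_S
    by (rule sum.cong) (auto simp: abs_minus_commute[of "B (snd _) - B (fst _) + gam * a"] algebra_simps)
  finally show ?thesis by simp
qed

lemma F_pos:
  assumes "k \<ge> 2"
  shows "F k eps gam B a > 0"
proof -
  have "(1,2) \<in> S k" using assms by (auto simp: S_def)
  hence "S k \<noteq> {}" by auto
  thus ?thesis unfolding F_S using finS by (intro sum_pos) auto
qed

lemma F_le:
  assumes "eps > 0" "gam > 0" "\<bar>a - b\<bar> \<le> 1"
  shows "F k eps gam B a \<le> exp (eps / 2) * F k eps gam B b"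
  unfolding F_S sum_distrib_left
  by (rule sum_mono) (rule term_bound[OF assms])

lemma F_le2:
  assumes "eps > 0" "gam > 0" "a \<in> {-1..1}" "b \<in> {-1..1}"
  shows "F k eps gam B a \<le> exp (eps / 2) * F k eps gam B b"
proof (cases "\<bar>a - b\<bar> \<le> 1")
  case True thus ?thesis using F_le assms by blast
next
  case False
  hence "\<bar>a - (-b)\<bar> \<le> 1" using assms by auto
  thus ?thesis using F_le[OF assms(1,2)] F_neg by metis
qed

lemma F_const:
  assumes "\<forall>i\<in>{1..k}. \<forall>j\<in>{1..k}. B i = B j"
  shows "F k eps gam B a = (\<Sum>p \<in> S k. exp (- (eps * \<bar>gam * a\<bar>) / (2 * gam)))"
  unfolding F_S
proof (rule sum.cong)
  fix p assume "p \<in> S k"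
  hence "fst p \<in> {1..k}" "snd p \<in> {1..k}" by (auto simp: S_def)
  hence "B (fst p) = B (snd p)" using assms by blast
  thus "exp (- (eps * \<bar>B (fst p) - B (snd p) + gam * a\<bar>) / (2 * gam))
        = exp (- (eps * \<bar>gam * a\<bar>) / (2 * gam))" by simp
qed simp

theorem lemma1:
  fixes eps gam :: real and k :: nat
  assumes "eps > 0" and "gam > 0" and "k \<ge> 2"
  shows "bdd_above (ratio_set k eps gam)
       \<and> Sup (ratio_set k eps gam) = exp (eps / 2)
       \<and> (\<forall>B :: nat \<Rightarrow> real. \<forall>a'. (\<forall>i\<in>{1..k}. \<forall>j\<in>{1..k}. B i = B j) \<and> a' \<in> {-1, 1}
            \<longrightarrow> F k eps gam B 0 / F k eps gam B a' = exp (eps / 2))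
       \<and> eps2 k eps gam = eps / 2
       \<and> expected_loss_II k eps gam = ((real k - 1) / real k) * (eps / 2)"
proof -
  have ub: "x \<le> exp (eps / 2)" if xin: "x \<in> ratio_set k eps gam" for x
  proof -
    obtain B a a' where x: "x = F k eps gam B a / F k eps gam B a'"
      and a: "a \<in> {-1..1}" "a' \<in> {-1..1}" using xin unfolding ratio_set_def by blast
    have "F k eps gam B a' > 0" using F_pos assms(3) by blast
    thus ?thesis using F_le2[OF assms(1,2) a] x by (simp add: divide_le_eq)
  qed
  have att: "F k eps gam B 0 / F k eps gam B a' = exp (eps / 2)"
    if "\<forall>i\<in>{1..k}. \<forall>j\<in>{1..k}. B i = B j" "a' \<in> {-1, 1}" for B a'
  proof -
    have "\<bar>a'\<bar> = 1" using that(2) by auto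
    hence e: "\<bar>gam * a'\<bar> = gam" using assms(2) by (simp add: abs_mult)
    have c: "card (S k) > 0"
    proof -
      have "(1,2) \<in> S k" using assms(3) by (auto simp: S_def)
      hence "S k \<noteq> {}" by auto
      thus ?thesis using finS by (simp add: card_gt_0_iff)
    qed
    have "F k eps gam B 0 = real (card (S k))" using F_const[OF that(1)] by simp
    moreover have "F k eps gam B a' = real (card (S k)) * exp (- eps / 2)"
      using F_const[OF that(1), of eps gam a'] e assms(2) by simp
    ultimately have "F k eps gam B 0 / F k eps gam B a' = real (card (S k)) / (real (card (S k)) * exp (- eps / 2))"
      by simp
    also have "\<dots> = 1 / exp (- eps / 2)" using c by simp
    also have "\<dots> = exp (eps / 2)"
    proof -
      have "exp (eps / 2) * exp (- eps / 2) = 1" by (simp add: exp_add[symmetric])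
      thus ?thesis by (simp add: exp_minus inverse_eq_divide)
    qed
    finally show ?thesis .
  qed
  have mem: "exp (eps / 2) \<in> ratio_set k eps gam"
  proof -
    have "exp (eps/2) = F k eps gam (\<lambda>_. 0) 0 / F k eps gam (\<lambda>_. 0) 1"
      using att[of "\<lambda>_. 0" 1] by simp
    thus ?thesis unfolding ratio_set_def by force
  qed
  have bdd: "bdd_above (ratio_set k eps gam)" using ub by (auto simp: bdd_above_def)
  have sup: "Sup (ratio_set k eps gam) = exp (eps / 2)"
    using mem ub by (intro cSup_eq_maximum) auto
  have e2: "eps2 k eps gam = eps / 2" by (simp add: eps2_def sup)
  have el: "expected_loss_II k eps gam = ((real k - 1) / real k) * (eps / 2)"
    by (simp add: expected_loss_II_def e2)
  have all: "\<forall>B :: nat \<Rightarrow> real. \<forall>a'. (\<forall>i\<in>{1..k}. \<forall>j\<in>{1..k}. B i = B j) \<and> a' \<in> {-1, 1}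
            \<longrightarrow> F k eps gam B 0 / F k eps gam B a' = exp (eps / 2)"
    using att by blast
  show ?thesis using bdd sup all e2 el by blast
qed

end
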